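(* Let $r>0$ and let $\mu:[0,\infty)\to\mathbb R$ and $\sigma:[0,\infty)\to(0,\infty)$ be globally Lipschitz continuous. Let $\psi\in C^2[0,\infty)$ be the non-negative increasing solution of $\frac{\sigma^2(x)}{2}f''(x)+\mu(x)f'(x)=rf(x)$ with $\psi(0)=0$, $\psi'(0)=1$. Fix $b\ge0$. If $x\mapsto\mu(x)-rx$ is non-decreasing on $[0,b)$ and $\mu(0)\ge0$, then $\psi$ is concave on $[0,b)$. *)

theory Defs
  imports "HOL-Analysis.Analysis"
begin

end

theory Submission
  imports Defs
begin

lemma mvt_within:
  fixes f f' :: "real \<Rightarrow> real"
  assumes "a < b" "{a..b} \<subseteq> S"
    and "\<And>x. x \<in> {a..b} \<Longrightarrow> (f has_real_derivative f' x) (at x within S)"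
  shows "\<exists>\<xi>\<in>{a<..<b}. f b - f a = f' \<xi> * (b - a)"
proof -
  have "\<exists>x\<in>{a<..<b}. f b - f a = (\<lambda>x h. f' x * h) x (b - a)"
  proof (rule mvt_simple[OF assms(1)])
    fix x assume "a \<le> x" "x \<le> b"
    then have "(f has_real_derivative f' x) (at x within {a..b})"
      using assms(2) has_field_derivative_subset[OF assms(3)] by auto
    then show "(f has_derivative (\<lambda>h. f' x * h)) (at x within {a..b})"
      by (simp add: has_field_derivative_def)
  qed
  then show ?thesis by (auto simp: mult.commute)
qed

lemma convex_within:
  fixes f f' :: "real \<Rightarrow> real"
  assumes "convex A" "A \<subseteq> S"
    and der: "\<And>x. x \<in> A \<Longrightarrow> (f has_real_derivative f' x) (at x within S)"
    and mon: "\<And>x y. x \<in> A \<Longrightarrow> y \<in> A \<Longrightarrow> x \<le> y \<Longrightarrow> f' x \<le> f' y"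
  shows "convex_on A f"
proof (rule convex_on_linorderI)
  show "convex A" by fact
next
  fix t x y :: real
  assume t: "t > 0" "t < 1"
  assume xy: "x \<in> A" "y \<in> A" "x < y"
  define z where "z = (1 - t) * x + t * y"
  have ivl: "{x..y} \<subseteq> A"
    proof -
    have "closed_segment x y \<subseteq> A" using assms(1) xy by (simp add: convex_contains_segment)
    then show ?thesis using xy by (simp add: closed_segment_eq_real_ivl)
  qed
  from xy t have xz: "z > x"
    by (simp add: z_def algebra_simps)
  have "y - z = (1 - t) * (y - x)"
    by (simp add: z_def algebra_simps)
  also from xy t have "\<dots> > 0"
    by (intro mult_pos_pos) simp_all
  finally have yz: "z < y"
    by simp
  have ivS: "{x..y} \<subseteq> S" using ivl assms(2) by blast
  have dd: "(f has_real_derivative f' u) (at u within S)" if "x \<le> u" "u \<le> y" for u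
    using der ivl that by auto
  have "\<exists>\<xi>\<in>{x<..<z}. f z - f x = f' \<xi> * (z - x)"
    by (rule mvt_within[where S=S, OF xz]) (use ivS yz dd in auto)
  then obtain \<xi> where \<xi>: "\<xi> > x" "\<xi> < z" "f z - f x = f' \<xi> * (z - x)"
    by auto
  have "\<exists>\<eta>\<in>{z<..<y}. f y - f z = f' \<eta> * (y - z)"
    by (rule mvt_within[where S=S, OF yz]) (use ivS xz dd in auto)
  then obtain \<eta> where \<eta>: "\<eta> > z" "\<eta> < y" "f y - f z = f' \<eta> * (y - z)"
    by auto
  have "\<xi> \<in> A" "\<eta> \<in> A" using \<xi>(1,2) \<eta>(1,2) ivl xz yz by auto
  then have le: "f' \<xi> \<le> f' \<eta>" using \<xi>(2) \<eta>(1) by (intro mon) auto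
  have zx: "z - x = t * (y - x)" by (simp add: z_def algebra_simps)
  have yz': "y - z = (1 - t) * (y - x)" by (simp add: z_def algebra_simps)
  have nn: "(1 - t) * t * (y - x) \<ge> 0" using t xy by simp
  have P: "f' \<xi> * ((1 - t) * t * (y - x)) \<le> f' \<eta> * ((1 - t) * t * (y - x))"
    using le nn by (rule mult_right_mono)
  have E1: "(1 - t) * (f z - f x) = f' \<xi> * ((1 - t) * t * (y - x))"
    using \<xi>(3) zx by simp
  have E2: "t * (f y - f z) = f' \<eta> * ((1 - t) * t * (y - x))"
    using \<eta>(3) yz' by simp
  have "(1 - t) * (f z - f x) \<le> t * (f y - f z)" using E1 E2 P by linarith
  then have "f z \<le> (1 - t) * f x + t * f y" by (simp add: algebra_simps)
  then show "(1 - t) * f x + t * f y \<ge> f ((1 - t) *\<^sub>R x + t *\<^sub>R y)"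
    by (simp add: z_def)
qed

theorem lemmaA3:
  fixes r b :: real and \<mu> \<sigma> \<psi> \<psi>' \<psi>'' :: "real \<Rightarrow> real"
  assumes r_pos: "r > 0"
    and mu_lip: "\<exists>L. L-lipschitz_on {0..} \<mu>"
    and sigma_lip: "\<exists>L. L-lipschitz_on {0..} \<sigma>"
    and sigma_pos: "\<And>x. x \<ge> 0 \<Longrightarrow> \<sigma> x > 0"
    and d1: "\<And>x. x \<ge> 0 \<Longrightarrow> (\<psi> has_real_derivative \<psi>' x) (at x within {0..})"
    and d2: "\<And>x. x \<ge> 0 \<Longrightarrow> (\<psi>' has_real_derivative \<psi>'' x) (at x within {0..})"
    and d2_cont: "continuous_on {0..} \<psi>''"
    and ode: "\<And>x. x \<ge> 0 \<Longrightarrow> (\<sigma> x)\<^sup>2 / 2 * \<psi>'' x + \<mu> x * \<psi>' x = r * \<psi> x"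
    and psi_nonneg: "\<And>x. x \<ge> 0 \<Longrightarrow> \<psi> x \<ge> 0"
    and psi_incr: "mono_on {0..} \<psi>"
    and psi0: "\<psi> 0 = 0"
    and dpsi0: "\<psi>' 0 = 1"
    and b_nonneg: "b \<ge> 0"
    and drift_mono: "mono_on {0..<b} (\<lambda>x. \<mu> x - r * x)"
    and mu0: "\<mu> 0 \<ge> 0"
  shows "concave_on {0..<b} \<psi>"
proof -
  have cpsi: "continuous_on {0..} \<psi>"
    unfolding continuous_on_eq_continuous_within
  proof
    fix x :: real assume "x \<in> {0..}"
    then show "continuous (at x within {0..}) \<psi>" by (intro DERIV_continuous[OF d1]) simp
  qed
  have cpsi': "continuous_on {0..} \<psi>'"
    unfolding continuous_on_eq_continuous_within
  proof
    fix x :: real assume "x \<in> {0..}"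
    then show "continuous (at x within {0..}) \<psi>'" by (intro DERIV_continuous[OF d2]) simp
  qed
  have cmu: "continuous_on {0..} \<mu>"
  proof -
    from mu_lip obtain L where "L-lipschitz_on {0..} \<mu>" by blast
    then show ?thesis by (rule lipschitz_on_continuous_on)
  qed
  have dnn: "\<psi>' x \<ge> 0" if xx0: "x \<ge> 0" for x
  proof (rule ccontr)
    assume "\<not> ?thesis"
    then have ng: "\<psi>' x < 0" by simp
    obtain d where d: "d > 0" and dd: "\<forall>h>0. x + h \<in> {0..} \<longrightarrow> h < d \<longrightarrow> \<psi> x > \<psi> (x + h)"
      using has_real_derivative_neg_dec_right[OF d1[OF xx0] ng] by blast
    have "\<psi> x > \<psi> (x + d/2)" using dd[rule_format, of "d/2"] xx0 d by simp
    moreover have "\<psi> x \<le> \<psi> (x + d/2)"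
      by (rule mono_onD[OF psi_incr]) (use xx0 d in auto)
    ultimately show False by simp
  qed
  have ppos: "\<psi> x > 0" if xx0: "x > 0" for x
  proof -
    have dp: "(0::real) < \<psi>' 0" using dpsi0 by simp
    obtain d where d: "d > 0" and dd: "\<forall>h>0. 0 + h \<in> {0..} \<longrightarrow> h < d \<longrightarrow> \<psi> 0 < \<psi> (0 + h)"
      using has_real_derivative_pos_inc_right[OF d1[of 0] dp] by auto
    define h where "h = min x (d/2)"
    have hp: "h > 0" "h < d" "h \<le> x" using d xx0 by (auto simp: h_def)
    have "\<psi> 0 < \<psi> h" using dd[rule_format, of h] hp by simp
    moreover have "\<psi> h \<le> \<psi> x"
      by (rule mono_onD[OF psi_incr]) (use hp in auto)
    ultimately show ?thesis using psi0 by simp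
  qed
  define hh where "hh = (\<lambda>y. \<mu> y * \<psi>' y - r * \<psi> y)"
  have hh_ode: "(\<sigma> y)\<^sup>2 / 2 * \<psi>'' y = - hh y" if "y \<ge> 0" for y
    using ode[OF that] by (simp add: hh_def algebra_simps)
  have chh: "continuous_on {0..} hh"
    unfolding hh_def by (intro continuous_intros cmu cpsi cpsi')
  have neg: "\<psi>'' x \<le> 0" if x: "x \<in> {0..<b}" for x
  proof (rule ccontr)
    assume "\<not> ?thesis"
    then have p: "\<psi>'' x > 0" by simp
    have sp: "(\<sigma> x)\<^sup>2 / 2 > 0" using sigma_pos[of x] x by simp
    have hx: "hh x < 0" using hh_ode[of x] x mult_pos_pos[OF sp p] by simp
    define S where "S = {0..x} \<inter> hh -` {0..}"
    have "closed S" unfolding S_def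
      by (rule continuous_closed_preimage) (auto intro: continuous_on_subset[OF chh])
    moreover have "0 \<in> S" using x psi0 dpsi0 mu0 by (simp add: S_def hh_def)
    moreover have "bdd_above S" unfolding S_def by (auto intro: bdd_aboveI[of _ x])
    ultimately have aS: "Sup S \<in> S" using closed_contains_Sup by blast
    define a where "a = Sup S"
    have a0: "a \<ge> 0" "a \<le> x" "hh a \<ge> 0" using aS by (auto simp: a_def S_def)
    have ax: "a < x" using a0 hx by (cases "a = x") auto
    have hneg: "hh y < 0" if "a < y" "y \<le> x" for y
    proof (rule ccontr)
      assume "\<not> ?thesis"
      then have "y \<in> S" using that a0 by (auto simp: S_def)
      then have "y \<le> a" unfolding a_def using \<open>bdd_above S\<close> by (rule cSup_upper)
      then show False using that by simp
    qed
    have ppp: "\<psi>'' y > 0" if "a < y" "y \<le> x" for y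
    proof (rule ccontr)
      assume "\<not> ?thesis"
      then have "(\<sigma> y)\<^sup>2 / 2 * \<psi>'' y \<le> 0"
        by (intro mult_nonneg_nonpos) auto
      then show False using hh_ode[of y] hneg[OF that] that a0 by simp
    qed
    have ivS: "{u..v} \<subseteq> {0..}" if "u \<ge> 0" for u v :: real using that by auto
    obtain e where e: "e \<in> {a<..<x}" "\<psi>' x - \<psi>' a = \<psi>'' e * (x - a)"
      using mvt_within[OF ax ivS[OF a0(1)], of \<psi>' \<psi>''] d2 a0 by auto
    have "\<psi>'' e * (x - a) > 0" using e ppp[of e] ax by (intro mult_pos_pos) auto
    then have g1: "\<psi>' x > \<psi>' a" using e(2) by linarith
    obtain c where c: "c \<in> {a<..<x}" "\<psi> x - \<psi> a = \<psi>' c * (x - a)"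
      using mvt_within[OF ax ivS[OF a0(1)], of \<psi> \<psi>'] d1 a0 by auto
    have c0: "c \<ge> 0" "c < x" using c a0 by auto
    obtain d where d: "d \<in> {c<..<x}" "\<psi>' x - \<psi>' c = \<psi>'' d * (x - c)"
      using mvt_within[OF c0(2) ivS[OF c0(1)], of \<psi>' \<psi>''] d2 c0 by auto
    have "\<psi>'' d * (x - c) > 0" using d ppp[of d] c by (intro mult_pos_pos) auto
    then have "\<psi>' c \<le> \<psi>' x" using d(2) by linarith
    then have g2: "\<psi> x - \<psi> a \<le> \<psi>' x * (x - a)" using c ax by (simp add: mult_right_mono)
    have mua: "\<mu> a \<ge> 0"
    proof (cases "\<psi>' a = 0")
      case True
      then have "\<psi> a \<le> 0" using a0 r_pos by (simp add: hh_def mult_le_0_iff)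
      then have "a = 0" using ppos[of a] a0 by fastforce
      then show ?thesis using True dpsi0 by simp
    next
      case False
      then have "\<psi>' a > 0" using dnn[of a] a0 by simp
      moreover have "\<mu> a * \<psi>' a \<ge> 0"
        using a0 psi_nonneg[of a] r_pos unfolding hh_def by (smt (verit) mult_nonneg_nonneg)
      ultimately show ?thesis by (simp add: zero_le_mult_iff)
    qed
    have drift: "\<mu> a - r * a \<le> \<mu> x - r * x"
      by (rule mono_onD[OF drift_mono]) (use a0 x ax in auto)
    have i1: "\<mu> x * \<psi>' x \<ge> (\<mu> a + r * (x - a)) * \<psi>' x"
      using drift dnn[of x] x by (intro mult_right_mono) (auto simp: algebra_simps)
    have i2: "r * (\<psi> x - \<psi> a) \<le> r * (\<psi>' x * (x - a))"
      using g2 r_pos by (intro mult_left_mono) auto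
    have i3: "\<mu> a * \<psi>' a \<le> \<mu> a * \<psi>' x"
      using g1 mua by (intro mult_left_mono) auto
    have "hh x \<ge> hh a"
      using i1 i2 i3 unfolding hh_def by (simp add: algebra_simps)
    then show False using hx a0 by simp
  qed
  have "convex_on {0..<b} (\<lambda>x. - \<psi> x)"
  proof (rule convex_within[where S = "{0..}" and f' = "\<lambda>x. - \<psi>' x"])
    show "convex {0..<b}" by simp
    show "{0..<b} \<subseteq> {0..}" by auto
    show "((\<lambda>x. - \<psi> x) has_real_derivative - \<psi>' x) (at x within {0..})" if "x \<in> {0..<b}" for x
      using d1[of x] that by (auto intro: derivative_intros)
    show "- \<psi>' x \<le> - \<psi>' y" if xA: "x \<in> {0..<b}" and yA: "y \<in> {0..<b}" and xley: "x \<le> y" for x y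
    proof (cases "x = y")
      case False
      then have xy: "x < y" using xley by simp
      obtain e where e: "e \<in> {x<..<y}" "\<psi>' y - \<psi>' x = \<psi>'' e * (y - x)"
        using mvt_within[OF xy, of "{0..}" \<psi>' \<psi>''] d2 xA by auto
      have "\<psi>'' e \<le> 0" using neg[of e] e xA yA by auto
      then have "\<psi>'' e * (y - x) \<le> 0" using xy by (simp add: mult_nonpos_nonneg)
      then show ?thesis using e by simp
    qed simp
  qed
  then show ?thesis by (simp add: concave_on_def)
qed

end
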